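(* For every $g\ge 2$, the Pearson degree correlation coefficient of $\mathcal{F}_g$ is $$r(\mathcal{F}_g)=\frac{(g-1)^2}{-3\cdot 2^g+g^2+2g+3}.$$
   Context: $\mathcal{F}_1$ is the 4-cycle; for $g>1$, $\mathcal{F}_g$ is obtained from $\mathcal{F}_{g-1}$ by replacing each edge $\{u,v\}$ with two new vertices each adjacent to both $u$ and $v$ (the edge $\{u,v\}$ itself is deleted). For a graph with $E$ edges whose $i$-th edge has endpoint degrees $j_i,k_i$, the Pearson correlation coefficient is $$r=\frac{E\sum_{i=1}^E j_ik_i-\left[\sum_{i=1}^E\frac12(j_i+k_i)\right]^2}{E\sum_{i=1}^E\frac12(j_i^2+k_i^2)-\left[\sum_{i=1}^E\frac12(j_i+k_i)\right]^2}.$$ *)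

theory Defs
  imports Complex_Main
begin

text \<open>Vertices: the four vertices of the initial 4-cycle, and new vertices
  created when an edge {u,v} is subdivided (two per edge, distinguished by a bool).\<close>
datatype vtx = Base nat | Mid vtx vtx bool

text \<open>A graph is given by its set of (undirected) edges, each a 2-element vertex set.\<close>
type_synonym graph = "vtx set set"

definition verts :: "graph \<Rightarrow> vtx set" where
  "verts E = \<Union> E"

definition deg :: "graph \<Rightarrow> vtx \<Rightarrow> nat" where
  "deg E v = card {e \<in> E. v \<in> e}"

text \<open>One step of the construction: each edge {u,v} is deleted and replaced by two
  new vertices, each adjacent to both u and v.  The new vertices are named
  Mid u v b for a chosen ordering (u,v) of the edge.\<close>
definition step :: "graph \<Rightarrow> graph" where
  "step E = (\<Union>e\<in>E. \<Union>b\<in>(UNIV::bool set).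
      (case (SOME p. e = {fst p, snd p}) of (u, v) \<Rightarrow>
         {{u, Mid u v b}, {v, Mid u v b}}))"

definition C4 :: graph where
  "C4 = {{Base 0, Base 1}, {Base 1, Base 2}, {Base 2, Base 3}, {Base 3, Base 0}}"

definition F :: "nat \<Rightarrow> graph" where
  "F g = (step ^^ (g - 1)) C4"

text \<open>Pearson degree correlation coefficient, exactly as in the paper, where for an
  edge e = {j-end, k-end}: j*k = prod of endpoint degrees, (j+k)/2 and (j^2+k^2)/2.\<close>
definition pearson :: "graph \<Rightarrow> real" where
  "pearson E = (let m = real (card E);
      S1 = (\<Sum>e\<in>E. \<Prod>v\<in>e. real (deg E v));
      S2 = (\<Sum>e\<in>E. (\<Sum>v\<in>e. real (deg E v)) / 2);
      S3 = (\<Sum>e\<in>E. (\<Sum>v\<in>e. real (deg E v) ^ 2) / 2)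
    in (m * S1 - S2 ^ 2) / (m * S3 - S2 ^ 2))"

end

theory Submission
  imports Defs
begin

definition pr :: "vtx set \<Rightarrow> vtx \<times> vtx" where
  "pr e = (SOME p. e = {fst p, snd p})"

definition MM :: "vtx set \<Rightarrow> bool \<Rightarrow> vtx" where
  "MM e b = Mid (fst (pr e)) (snd (pr e)) b"

definition Dom :: "graph \<Rightarrow> (vtx set \<times> bool \<times> vtx) set" where
  "Dom E = (SIGMA e:E. (UNIV::bool set) \<times> e)"

definition Phi :: "vtx set \<times> bool \<times> vtx \<Rightarrow> vtx set" where
  "Phi = (\<lambda>(e,b,x). {x, MM e b})"

definition good :: "graph \<Rightarrow> bool" where
  "good E = (finite E \<and> (\<forall>e\<in>E. card e = 2) \<and>
     (\<forall>w\<in>verts E. \<forall>x y c. w = Mid x y c \<longrightarrow> x \<in> verts E \<and> y \<in> verts E \<and> {x,y} \<notin> E))"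

definition Q :: "(nat \<Rightarrow> real) \<Rightarrow> graph \<Rightarrow> real" where
  "Q h E = (\<Sum>e\<in>E. \<Sum>v\<in>e. h (deg E v))"

lemma good_c2: "good E \<Longrightarrow> \<forall>e\<in>E. card e = 2" unfolding good_def by blast
lemma good_fin: "good E \<Longrightarrow> finite E" unfolding good_def by blast

lemma pr_eq: assumes "card e = 2" shows "e = {fst (pr e), snd (pr e)}"
proof -
  from assms obtain x y where "e = {x,y}" by (auto simp: card_2_iff)
  hence "\<exists>p. e = {fst p, snd p}" by (intro exI[of _ "(x,y)"]) auto
  thus ?thesis unfolding pr_def by (rule someI_ex)
qed

lemma step_case: "(case pr e of (u, v) \<Rightarrow> {{u, Mid u v b}, {v, Mid u v b}})
   = {{fst (pr e), MM e b}, {snd (pr e), MM e b}}"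
  unfolding MM_def by (cases "pr e") simp

lemma Phi_Dom: "Phi ` Dom E = (\<Union>e\<in>E. \<Union>b\<in>(UNIV::bool set). (\<lambda>x. {x, MM e b}) ` e)"
proof
  show "Phi ` Dom E \<subseteq> (\<Union>e\<in>E. \<Union>b\<in>(UNIV::bool set). (\<lambda>x. {x, MM e b}) ` e)"
  proof
    fix f assume "f \<in> Phi ` Dom E"
    then obtain e b x where "e \<in> E" "x \<in> e" "f = {x, MM e b}" unfolding Phi_def Dom_def by auto
    thus "f \<in> (\<Union>e\<in>E. \<Union>b\<in>(UNIV::bool set). (\<lambda>x. {x, MM e b}) ` e)" by blast
  qed
next
  show "(\<Union>e\<in>E. \<Union>b\<in>(UNIV::bool set). (\<lambda>x. {x, MM e b}) ` e) \<subseteq> Phi ` Dom E"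
  proof
    fix f assume "f \<in> (\<Union>e\<in>E. \<Union>b\<in>(UNIV::bool set). (\<lambda>x. {x, MM e b}) ` e)"
    then obtain e b x where "e \<in> E" "x \<in> e" "f = {x, MM e b}" by blast
    hence "(e,b,x) \<in> Dom E" "f = Phi (e,b,x)" unfolding Dom_def Phi_def by auto
    thus "f \<in> Phi ` Dom E" by blast
  qed
qed

lemma step_eq: assumes "\<forall>e\<in>E. card e = 2" shows "step E = Phi ` Dom E"
proof -
  have "step E = (\<Union>e\<in>E. \<Union>b\<in>(UNIV::bool set). {{fst (pr e), MM e b}, {snd (pr e), MM e b}})"
    unfolding step_def pr_def[symmetric] step_case ..
  also have "\<dots> = (\<Union>e\<in>E. \<Union>b\<in>(UNIV::bool set). (\<lambda>x. {x, MM e b}) ` e)"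
  proof (rule SUP_cong[OF refl])
    fix e assume "e \<in> E"
    hence e: "e = {fst (pr e), snd (pr e)}" using assms pr_eq by auto
    have "\<And>b. (\<lambda>x. {x, MM e b}) ` e = {{fst (pr e), MM e b}, {snd (pr e), MM e b}}"
      by (subst e) simp
    thus "(\<Union>b\<in>(UNIV::bool set). {{fst (pr e), MM e b}, {snd (pr e), MM e b}}) =
          (\<Union>b\<in>(UNIV::bool set). (\<lambda>x. {x, MM e b}) ` e)" by simp
  qed
  also have "\<dots> = Phi ` Dom E" by (rule Phi_Dom[symmetric])
  finally show ?thesis .
qed

lemma verts_mem: "x \<in> e \<Longrightarrow> e \<in> E \<Longrightarrow> x \<in> verts E"
  unfolding verts_def by auto

lemma MM_notin: assumes "good E" "e \<in> E" shows "MM e b \<notin> verts E"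
proof
  assume "MM e b \<in> verts E"
  with assms have "{fst (pr e), snd (pr e)} \<notin> E" unfolding good_def MM_def by blast
  moreover have "e = {fst (pr e), snd (pr e)}" using assms pr_eq unfolding good_def by auto
  ultimately show False using assms by auto
qed

lemma MM_inj: assumes "good E" "e \<in> E" "e' \<in> E" "MM e b = MM e' b'" shows "e = e' \<and> b = b'"
proof -
  have "e = {fst (pr e), snd (pr e)}" "e' = {fst (pr e'), snd (pr e')}"
    using assms pr_eq unfolding good_def by auto
  with assms(4) show ?thesis unfolding MM_def by auto
qed

lemma Dom_fin: assumes "good E" shows "finite (Dom E)"
proof -
  have "\<forall>e\<in>E. finite e" using assms unfolding good_def by (metis card.infinite zero_neq_numeral)
  thus ?thesis using assms unfolding Dom_def good_def by (auto intro!: finite_SigmaI)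
qed

lemma Phi_inj: assumes "good E" shows "inj_on Phi (Dom E)"
proof (rule inj_onI)
  fix d d' assume d: "d \<in> Dom E" "d' \<in> Dom E" "Phi d = Phi d'"
  obtain e b x where 1: "d = (e,b,x)" by (cases d) auto
  obtain e' b' x' where 2: "d' = (e',b',x')" by (cases d') auto
  have m: "e \<in> E" "x \<in> e" "e' \<in> E" "x' \<in> e'" using d 1 2 unfolding Dom_def by auto
  have n1: "MM e b \<notin> verts E" "MM e' b' \<notin> verts E" using MM_notin assms m by auto
  have v: "x \<in> verts E" "x' \<in> verts E" using m verts_mem by auto
  have "{x, MM e b} = {x', MM e' b'}" using d 1 2 unfolding Phi_def by auto
  hence "x = x' \<and> MM e b = MM e' b'" using n1 v by (auto simp: doubleton_eq_iff)
  thus "d = d'" using MM_inj[OF assms m(1) m(3)] 1 2 by auto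
qed

lemma verts_step: assumes "good E"
  shows "verts (step E) = verts E \<union> {MM e b |e b. e \<in> E}"
proof -
  have c2: "\<forall>e\<in>E. card e = 2" using good_c2[OF assms(1)] .
  have se: "step E = Phi ` Dom E" using step_eq[OF c2] .
  show ?thesis
  proof
    show "verts (step E) \<subseteq> verts E \<union> {MM e b |e b. e \<in> E}"
    proof
      fix v assume "v \<in> verts (step E)"
      then obtain f where "f \<in> step E" "v \<in> f" unfolding verts_def by auto
      then obtain e b x where "e \<in> E" "x \<in> e" "v \<in> {x, MM e b}"
        using se unfolding Phi_def Dom_def by auto
      thus "v \<in> verts E \<union> {MM e b |e b. e \<in> E}" using verts_mem by auto
    qed
  next
    show "verts E \<union> {MM e b |e b. e \<in> E} \<subseteq> verts (step E)"
    proof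
      fix v assume "v \<in> verts E \<union> {MM e b |e b. e \<in> E}"
      then obtain e b x where eb: "e \<in> E" "x \<in> e" "v = x \<or> v = MM e b"
      proof
        assume "v \<in> verts E"
        then obtain e where "e \<in> E" "v \<in> e" unfolding verts_def by auto
        thus ?thesis using that by blast
      next
        assume "v \<in> {MM e b |e b. e \<in> E}"
        then obtain e b where "e \<in> E" "v = MM e b" by auto
        moreover have "e \<noteq> {}" using c2 calculation by auto
        ultimately show ?thesis using that by blast
      qed
      hence "(e,b,x) \<in> Dom E" unfolding Dom_def by auto
      hence "{x, MM e b} \<in> step E" using se unfolding Phi_def by force
      thus "v \<in> verts (step E)" using eb unfolding verts_def by auto
    qed
  qed
qed

lemma good_step: assumes "good E" shows "good (step E)"
proof -
  have c2: "\<forall>e\<in>E. card e = 2" using good_c2[OF assms(1)] .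
  have se: "step E = Phi ` Dom E" using step_eq[OF c2] .
  have edge: "\<exists>e b x. e \<in> E \<and> x \<in> e \<and> f = {x, MM e b}" if fin_: "f \<in> step E" for f
  proof -
    obtain d where d: "d \<in> Dom E" "f = Phi d" using fin_ se by auto
    obtain e b x where "d = (e,b,x)" by (cases d) auto
    thus ?thesis using d unfolding Dom_def Phi_def by auto
  qed
  have fin: "finite (step E)" using se Dom_fin[OF assms] by auto
  have card: "\<forall>f\<in>step E. card f = 2"
  proof
    fix f assume "f \<in> step E"
    then obtain e b x where "e \<in> E" "x \<in> e" "f = {x, MM e b}" using edge by blast
    moreover have "x \<in> verts E" using verts_mem calculation by blast
    moreover have "MM e b \<notin> verts E" using MM_notin[OF assms] calculation by blast
    ultimately have "x \<noteq> MM e b" by auto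
    thus "card f = 2" using \<open>f = {x, MM e b}\<close> by simp
  qed
  have noedge: "{x,y} \<notin> step E" if "x \<in> verts E" "y \<in> verts E" for x y
  proof
    assume "{x,y} \<in> step E"
    then obtain e b z where "e \<in> E" "{x,y} = {z, MM e b}" using edge by blast
    hence "MM e b \<in> {x,y}" by auto
    hence "MM e b \<in> verts E" using that by auto
    thus False using MM_notin[OF assms \<open>e \<in> E\<close>] by auto
  qed
  have sub: "verts E \<subseteq> verts (step E)" using verts_step[OF assms] by blast
  have inv: "\<forall>w\<in>verts (step E). \<forall>x y c. w = Mid x y c \<longrightarrow>
      x \<in> verts (step E) \<and> y \<in> verts (step E) \<and> {x,y} \<notin> step E"
  proof (intro ballI allI impI)
    fix w x y c assume w: "w \<in> verts (step E)" "w = Mid x y c"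
    have xy: "x \<in> verts E \<and> y \<in> verts E"
    proof (cases "w \<in> verts E")
      case True
      have "\<forall>w\<in>verts E. \<forall>x y c. w = Mid x y c \<longrightarrow> x \<in> verts E \<and> y \<in> verts E \<and> {x,y} \<notin> E"
        using assms unfolding good_def by blast
      with True w(2) show ?thesis by blast
    next
      case False
      have "w \<in> verts E \<union> {MM e b |e b. e \<in> E}" using w(1) verts_step[OF assms] by simp
      with False obtain e b where e: "e \<in> E" "w = MM e b" by blast
      hence "x = fst (pr e)" "y = snd (pr e)" using w(2) unfolding MM_def by simp_all
      hence "{x,y} = e" using pr_eq c2 e(1) by metis
      thus ?thesis using e(1) verts_mem by blast
    qed
    thus "x \<in> verts (step E) \<and> y \<in> verts (step E) \<and> {x,y} \<notin> step E"
      using noedge sub by blast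
  qed
  show ?thesis unfolding good_def using fin card inv by (intro conjI)
qed

lemma deg_old: assumes "good E" "v \<in> verts E" shows "deg (step E) v = 2 * deg E v"
proof -
  have c2: "\<forall>e\<in>E. card e = 2" using good_c2[OF assms(1)] .
  have se: "step E = Phi ` Dom E" using step_eq[OF c2] .
  have finE: "finite E" using good_fin[OF assms(1)] .
  have "{f \<in> step E. v \<in> f} = Phi ` {d \<in> Dom E. v \<in> Phi d}" using se by auto
  moreover have "card (Phi ` {d \<in> Dom E. v \<in> Phi d}) = card {d \<in> Dom E. v \<in> Phi d}"
    by (rule card_image[OF inj_on_subset[OF Phi_inj[OF assms(1)]]]) blast
  ultimately have "deg (step E) v = card {d \<in> Dom E. v \<in> Phi d}" unfolding deg_def by simp
  also have "{d \<in> Dom E. v \<in> Phi d} = (\<lambda>(e,b). (e,b,v)) ` ({e\<in>E. v \<in> e} \<times> UNIV)"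
  proof (rule set_eqI)
    fix d :: "vtx set \<times> bool \<times> vtx"
    obtain e b x where d: "d = (e,b,x)" by (cases d) auto
    show "d \<in> {d \<in> Dom E. v \<in> Phi d} \<longleftrightarrow> d \<in> (\<lambda>(e,b). (e,b,v)) ` ({e\<in>E. v \<in> e} \<times> UNIV)"
    proof
      assume "d \<in> {d \<in> Dom E. v \<in> Phi d}"
      hence h: "e \<in> E" "x \<in> e" "v \<in> {x, MM e b}" using d unfolding Dom_def Phi_def by auto
      have "v \<noteq> MM e b" using MM_notin[OF assms(1) h(1)] assms(2) by auto
      hence "v = x" using h(3) by auto
      thus "d \<in> (\<lambda>(e,b). (e,b,v)) ` ({e\<in>E. v \<in> e} \<times> UNIV)" using h d by auto
    next
      assume "d \<in> (\<lambda>(e,b). (e,b,v)) ` ({e\<in>E. v \<in> e} \<times> UNIV)"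
      thus "d \<in> {d \<in> Dom E. v \<in> Phi d}" unfolding Dom_def Phi_def by auto
    qed
  qed
  also have "card \<dots> = card ({e\<in>E. v \<in> e} \<times> (UNIV::bool set))"
    by (rule card_image) (auto simp: inj_on_def)
  also have "\<dots> = 2 * deg E v" unfolding deg_def using finE by (simp add: card_cartesian_product)
  finally show ?thesis .
qed

lemma deg_new: assumes "good E" "e \<in> E" shows "deg (step E) (MM e b) = 2"
proof -
  have c2: "\<forall>e\<in>E. card e = 2" using good_c2[OF assms(1)] .
  have se: "step E = Phi ` Dom E" using step_eq[OF c2] .
  have "{f \<in> step E. MM e b \<in> f} = Phi ` {d \<in> Dom E. MM e b \<in> Phi d}" using se by auto
  moreover have "card (Phi ` {d \<in> Dom E. MM e b \<in> Phi d}) = card {d \<in> Dom E. MM e b \<in> Phi d}"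
    by (rule card_image[OF inj_on_subset[OF Phi_inj[OF assms(1)]]]) blast
  ultimately have "deg (step E) (MM e b) = card {d \<in> Dom E. MM e b \<in> Phi d}" unfolding deg_def by simp
  also have "{d \<in> Dom E. MM e b \<in> Phi d} = (\<lambda>x. (e,b,x)) ` e"
  proof (rule set_eqI)
    fix d :: "vtx set \<times> bool \<times> vtx"
    obtain e' b' x where d: "d = (e',b',x)" by (cases d) auto
    show "d \<in> {d \<in> Dom E. MM e b \<in> Phi d} \<longleftrightarrow> d \<in> (\<lambda>x. (e,b,x)) ` e"
    proof
      assume "d \<in> {d \<in> Dom E. MM e b \<in> Phi d}"
      hence h: "e' \<in> E" "x \<in> e'" "MM e b \<in> {x, MM e' b'}" using d unfolding Dom_def Phi_def by auto
      have "x \<in> verts E" using h verts_mem by blast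
      hence "MM e b \<noteq> x" using MM_notin[OF assms] by auto
      hence "MM e b = MM e' b'" using h(3) by auto
      hence "e = e' \<and> b = b'" using MM_inj[OF assms(1) assms(2) h(1)] by blast
      thus "d \<in> (\<lambda>x. (e,b,x)) ` e" using h d by auto
    next
      assume "d \<in> (\<lambda>x. (e,b,x)) ` e"
      thus "d \<in> {d \<in> Dom E. MM e b \<in> Phi d}" using assms(2) unfolding Dom_def Phi_def by auto
    qed
  qed
  also have "card \<dots> = card e" by (rule card_image) (auto simp: inj_on_def)
  finally show ?thesis using c2 assms(2) by simp
qed

lemma sum_step: assumes "good E"
  shows "(\<Sum>f\<in>step E. G f) = (\<Sum>e\<in>E. \<Sum>x\<in>e. G {x, MM e False} + G {x, MM e True})"
proof -
  have c2: "\<forall>e\<in>E. card e = 2" using good_c2[OF assms(1)] .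
  have finE: "finite E" using good_fin[OF assms(1)] .
  have fine: "\<forall>e\<in>E. finite e" using c2 by (metis card.infinite zero_neq_numeral)
  have "(\<Sum>f\<in>step E. G f) = (\<Sum>d\<in>Dom E. G (Phi d))"
    unfolding step_eq[OF c2] by (rule sum.reindex[OF Phi_inj[OF assms], unfolded comp_def])
  also have "\<dots> = (\<Sum>e\<in>E. \<Sum>p\<in>(UNIV::bool set) \<times> e. G (Phi (e,p)))"
    unfolding Dom_def using finE fine by (subst sum.Sigma) auto
  also have "\<dots> = (\<Sum>e\<in>E. \<Sum>b\<in>(UNIV::bool set). \<Sum>x\<in>e. G (Phi (e,b,x)))"
    by (rule sum.cong[OF refl]) (simp add: sum.cartesian_product)
  also have "\<dots> = (\<Sum>e\<in>E. \<Sum>x\<in>e. G {x, MM e False} + G {x, MM e True})"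
    by (simp add: UNIV_bool Phi_def sum.distrib)
  finally show ?thesis .
qed

lemma card_step: assumes "good E" shows "card (step E) = 4 * card E"
proof -
  have c2: "\<forall>e\<in>E. card e = 2" using good_c2[OF assms(1)] .
  have finE: "finite E" using good_fin[OF assms(1)] .
  have fine: "\<forall>e\<in>E. finite e" using c2 by (metis card.infinite zero_neq_numeral)
  have "card (step E) = card (Dom E)"
    unfolding step_eq[OF c2] by (rule card_image[OF Phi_inj[OF assms]])
  also have "\<dots> = (\<Sum>e\<in>E. card ((UNIV::bool set) \<times> e))"
    unfolding Dom_def using finE fine by (subst card_SigmaI) auto
  also have "\<dots> = (\<Sum>e\<in>E. 4)" using c2 by (intro sum.cong) (auto simp: card_cartesian_product)
  finally show ?thesis by simp
qed

lemma G_edge: assumes "good E" "e \<in> E" "x \<in> e"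
  shows "(\<Sum>v\<in>{x, MM e b}. h (deg (step E) v)) = h (2 * deg E x) + h 2"
    and "(\<Prod>v\<in>{x, MM e b}. real (deg (step E) v)) = real (2 * deg E x) * 2"
proof -
  have xv: "x \<in> verts E" using assms verts_mem by blast
  have ne: "x \<noteq> MM e b" using MM_notin[OF assms(1,2)] xv by auto
  show "(\<Sum>v\<in>{x, MM e b}. h (deg (step E) v)) = h (2 * deg E x) + h 2"
    using ne deg_old[OF assms(1) xv] deg_new[OF assms(1,2)] by simp
  show "(\<Prod>v\<in>{x, MM e b}. real (deg (step E) v)) = real (2 * deg E x) * 2"
    using ne deg_old[OF assms(1) xv] deg_new[OF assms(1,2)] by simp
qed

lemma Q_step: assumes "good E"
  shows "Q h (step E) = 2 * Q (\<lambda>n. h (2 * n)) E + 4 * real (card E) * h 2"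
proof -
  have c2: "\<forall>e\<in>E. card e = 2" using good_c2[OF assms(1)] .
  have "Q h (step E) = (\<Sum>e\<in>E. \<Sum>x\<in>e. 2 * h (2 * deg E x) + 2 * h 2)"
    unfolding Q_def sum_step[OF assms]
    by (intro sum.cong refl) (simp add: G_edge[OF assms])
  also have "\<dots> = (\<Sum>e\<in>E. 2 * (\<Sum>x\<in>e. h (2 * deg E x)) + 4 * h 2)"
    using c2 by (intro sum.cong refl) (simp add: sum.distrib sum_distrib_left)
  also have "\<dots> = 2 * Q (\<lambda>n. h (2 * n)) E + 4 * real (card E) * h 2"
    unfolding Q_def by (simp add: sum.distrib sum_distrib_left)
  finally show ?thesis .
qed

lemma P_step: assumes "good E"
  shows "(\<Sum>f\<in>step E. \<Prod>v\<in>f. real (deg (step E) v)) = 8 * Q real E"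
proof -
  have "(\<Sum>f\<in>step E. \<Prod>v\<in>f. real (deg (step E) v)) = (\<Sum>e\<in>E. \<Sum>x\<in>e. 8 * real (deg E x))"
    unfolding sum_step[OF assms]
    by (intro sum.cong refl) (simp add: G_edge[OF assms])
  thus ?thesis unfolding Q_def by (simp add: sum_distrib_left)
qed

lemma C4_good: "good C4"
  unfolding good_def C4_def verts_def by auto

lemma C4_card: "card C4 = 4"
  unfolding C4_def by (simp add: doubleton_eq_iff)

lemma C4_deg: assumes "e \<in> C4" "v \<in> e" shows "deg C4 v = 2"
proof -
  have "v \<in> {Base 0, Base 1, Base 2, Base 3}" using assms unfolding C4_def by auto
  moreover have h0: "{e \<in> C4. Base 0 \<in> e} = {{Base 0, Base 1}, {Base 3, Base 0}}" unfolding C4_def by auto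
  moreover have h1: "{e \<in> C4. Base 1 \<in> e} = {{Base 0, Base 1}, {Base 1, Base 2}}" unfolding C4_def by auto
  moreover have h2: "{e \<in> C4. Base 2 \<in> e} = {{Base 1, Base 2}, {Base 2, Base 3}}" unfolding C4_def by auto
  moreover have h3: "{e \<in> C4. Base 3 \<in> e} = {{Base 2, Base 3}, {Base 3, Base 0}}" unfolding C4_def by auto
  ultimately show ?thesis
  proof (elim insertE emptyE)
    assume "v = Base 0" thus ?thesis unfolding deg_def using h0 by (simp add: doubleton_eq_iff)
  next
    assume "v = Base 1" thus ?thesis unfolding deg_def using h1 by (simp add: doubleton_eq_iff)
  next
    assume "v = Base 2" thus ?thesis unfolding deg_def using h2 by (simp add: doubleton_eq_iff)
  next
    assume "v = Base 3" thus ?thesis unfolding deg_def using h3 by (simp add: doubleton_eq_iff)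
  qed
qed

lemma C4_Q: "Q h C4 = 8 * h 2"
proof -
  have "Q h C4 = (\<Sum>e\<in>C4. \<Sum>v\<in>e. h 2)" unfolding Q_def
    using C4_deg by (intro sum.cong refl) auto
  also have "\<dots> = (\<Sum>e\<in>C4. 2 * h 2)"
    using good_c2[OF C4_good] by (intro sum.cong refl) simp
  finally show ?thesis using C4_card by simp
qed

lemma Q_mult: "Q (\<lambda>n. c * f n) E = c * Q f E"
  unfolding Q_def by (simp add: sum_distrib_left)

lemma main_ind: "good ((step^^n) C4) \<and> real (card ((step^^n) C4)) = 4^(n+1) \<and>
  Q real ((step^^n) C4) = 4^(n+1) * (2*real n+4) \<and>
  Q (\<lambda>k. real k ^ 2) ((step^^n) C4) = 6*8^(n+1) - 4*4^(n+1)"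
proof (induction n)
  case 0
  show ?case using C4_good C4_card C4_Q[of real] C4_Q[of "\<lambda>k. real k ^ 2"] by simp
next
  case (Suc n)
  let ?E = "(step^^n) C4"
  have g: "good ?E" and c: "real (card ?E) = 4^(n+1)" and q1: "Q real ?E = 4^(n+1) * (2*real n+4)"
    and q2: "Q (\<lambda>k. real k ^ 2) ?E = 6*8^(n+1) - 4*4^(n+1)" using Suc by auto
  have e: "(step^^Suc n) C4 = step ?E" by simp
  have a1: "Q (\<lambda>k. real (2 * k)) ?E = 2 * Q real ?E" using Q_mult[of 2 real] by simp
  have a2: "Q (\<lambda>k. real (2 * k) ^ 2) ?E = 4 * Q (\<lambda>k. real k ^ 2) ?E"
    using Q_mult[of 4 "\<lambda>k. real k ^ 2"] by (simp add: power_mult_distrib)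
  have "good (step ?E)" using good_step[OF g] .
  moreover have "real (card (step ?E)) = 4^(Suc n+1)" using card_step[OF g] c by simp
  moreover have "Q real (step ?E) = 4^(Suc n+1) * (2*real (Suc n)+4)"
    using Q_step[OF g, of real] a1 q1 c by (simp add: algebra_simps)
  moreover have "Q (\<lambda>k. real k ^ 2) (step ?E) = 6*8^(Suc n+1) - 4*4^(Suc n+1)"
    using Q_step[OF g, of "\<lambda>k. real k ^ 2"] a2 q2 c by (simp add: algebra_simps)
  ultimately show ?case unfolding e by blast
qed

theorem proposition5:
  fixes g :: nat
  assumes "g \<ge> 2"
  shows "pearson (F g) = (real g - 1) ^ 2 / (- 3 * 2 ^ g + (real g) ^ 2 + 2 * real g + 3)"
proof -
  obtain n where gn: "g = n + 2" using assms by (metis add.commute le_Suc_ex)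
  let ?E = "(step^^n) C4"
  have I: "good ?E" "real (card ?E) = 4^(n+1)" "Q real ?E = 4^(n+1) * (2*real n+4)"
    "Q (\<lambda>k. real k ^ 2) ?E = 6*8^(n+1) - 4*4^(n+1)" using main_ind[of n] by auto
  have Fg: "F g = step ?E" unfolding F_def gn by simp
  define t :: real where "t = 2^(n+1)"
  have t4: "(4::real)^(n+1) = t^2" unfolding t_def power2_eq_square power_mult_distrib[symmetric] by simp
  have t8: "(8::real)^(n+1) = t^3" unfolding t_def power3_eq_cube power_mult_distrib[symmetric] by simp
  have t2: "(2::real)^g = 2*t" unfolding t_def gn by simp
  note J = I(2)[unfolded t4] I(3)[unfolded t4] I(4)[unfolded t4 t8]
  have tpos: "t > 0" unfolding t_def by simp
  define E' where "E' = step ?E"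
  have m: "real (card E') = 4 * t^2" unfolding E'_def using card_step[OF I(1)] I(2) t4 by simp
  have S1: "(\<Sum>e\<in>E'. \<Prod>v\<in>e. real (deg E' v)) = 8 * t^2 * (2*real n+4)"
    unfolding E'_def P_step[OF I(1)] I(3) t4 by simp
  have S2: "(\<Sum>e\<in>E'. (\<Sum>v\<in>e. real (deg E' v)) / 2) = t^2 * (4*real n + 12)"
  proof -
    have "(\<Sum>e\<in>E'. (\<Sum>v\<in>e. real (deg E' v)) / 2) = Q real E' / 2"
      unfolding Q_def by (simp add: sum_divide_distrib)
    also have "\<dots> = t^2 * (4*real n + 12)"
      unfolding E'_def Q_step[OF I(1)] using Q_mult[of 2 real ?E] J(1,2) by (simp add: algebra_simps)
    finally show ?thesis .
  qed
  have S3: "(\<Sum>e\<in>E'. (\<Sum>v\<in>e. real (deg E' v) ^ 2) / 2) = 24 * t^3 - 8 * t^2"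
  proof -
    have "(\<Sum>e\<in>E'. (\<Sum>v\<in>e. real (deg E' v) ^ 2) / 2) = Q (\<lambda>k. real k ^ 2) E' / 2"
      unfolding Q_def by (simp add: sum_divide_distrib)
    also have "\<dots> = 24 * t^3 - 8 * t^2"
    proof -
      have "Q (\<lambda>k. real (2 * k) ^ 2) ?E = 4 * Q (\<lambda>k. real k ^ 2) ?E"
        using Q_mult[of 4 "\<lambda>k. real k ^ 2"] by (simp add: power_mult_distrib)
      also have "\<dots> = 4 * (6*t^3 - 4*t^2)" by (simp only: J(3))
      finally have q: "Q (\<lambda>k. real (2 * k) ^ 2) ?E = 4 * (6*t^3 - 4*t^2)" .
      show ?thesis unfolding E'_def Q_step[OF I(1)] by (simp only: q J(1)) (simp add: field_simps)
    qed
    finally show ?thesis .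
  qed
  define c :: real where "c = - 16 * t^4"
  have cne: "c \<noteq> 0" unfolding c_def using tpos by simp
  have num: "4 * t^2 * (8 * t^2 * (2*real n+4)) - (t^2 * (4*real n + 12))^2 = c * (real g - 1)^2"
    unfolding c_def gn by (simp add: algebra_simps power2_eq_square power4_eq_xxxx)
  have den: "4 * t^2 * (24 * t^3 - 8 * t^2) - (t^2 * (4*real n + 12))^2
      = c * (- 3 * 2 ^ g + (real g) ^ 2 + 2 * real g + 3)"
    unfolding c_def t2 unfolding gn by (simp add: algebra_simps power2_eq_square power4_eq_xxxx power3_eq_cube)
  have "pearson (F g) = (4 * t^2 * (8 * t^2 * (2*real n+4)) - (t^2 * (4*real n + 12))^2) /
      (4 * t^2 * (24 * t^3 - 8 * t^2) - (t^2 * (4*real n + 12))^2)"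
    unfolding Fg pearson_def E'_def[symmetric] Let_def m S1 S2 S3 ..
  also have "\<dots> = (real g - 1) ^ 2 / (- 3 * 2 ^ g + (real g) ^ 2 + 2 * real g + 3)"
    unfolding num den using cne by simp
  finally show ?thesis .
qed

end
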